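(* Let $k,\ell,n$ be integers with $2\le\ell<k/2$, $n\ge1$, and let $G_1$, $U_i$, $H_1=H_1^1\cup H_1^2$, $H_2$, $tr_1$ and $\min$ be as in the context. Let $s\ge1$ and let $P=(e,e_1,\dots,e_s,e')$ be an $(\ell,k)$-path (edges listed in order) with $e,e'\in H_1$ and $e_1,\dots,e_s\in H_2$. Then (i) $\min(e_1)=\dots=\min(e_s)\in tr_1(e)\cap tr_1(e')$; (ii) at most one of $e,e'$ belongs to $H_1^2$.
   Context: Let $G_1$ be a graph on vertex set $[n]=\{1,\dots,n\}$. Let $\{A_i,B_i: i=1,\dots,2n\}$ be $4n$ pairwise disjoint finite sets with $|A_i|=2\lfloor k/2\rfloor+\ell$ for $1\le i\le n$ and $|A_i|=2k-2\ell-3$ for $n+1\le i\le 2n$; put $U_i=A_i\cup B_i$ and $V=\bigcup_{i=1}^{2n}U_i$. For $S\subseteq V$ let $tr(S)=\{i:S\cap U_i\ne\emptyset\}$, $tr_1(S)=tr(S)\cap[n]$, $\min(S)=\min tr(S)$. Define $H_1^1$ as the set of $k$-subsets $e\subseteq V$ such that for some edge $\{i,j\}$ of $G_1$, $tr_1(e)=\{i,j\}$, $|A_i\cap e|\ge\lfloor k/2\rfloor$ and $|A_j\cap e|\ge\lfloor k/2\rfloor$. Define $H_1^2$ as the set of $k$-subsets $e\subseteq V$ such that for some $i\in[n]$, $tr(e)=\{i,n+i\}$, $|A_i\cap e|=\ell+1$ and $|A_{n+i}\cap e|=k-\ell-1$. Let $H_1=H_1^1\cup H_1^2$, and let $H_2$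 be the set of $k$-subsets $e\subseteq V$ with $|e\cap U_{\min(e)}|\ge k-\ell+1$. An $(\ell,k)$-path is a $k$-graph with distinct vertices $v_1,\dots,v_s$, $s\equiv\ell\pmod{k-\ell}$, $s\ge k$, and edges $\{v_{i(k-\ell)+1},\dots,v_{i(k-\ell)+k}\}$, $i=0,\dots,(s-k)/(k-\ell)$. *)

theory Defs
  imports Main
begin

definition U :: "(nat \<Rightarrow> 'a set) \<Rightarrow> (nat \<Rightarrow> 'a set) \<Rightarrow> nat \<Rightarrow> 'a set" where
  "U A B i = A i \<union> B i"

definition Vset :: "nat \<Rightarrow> (nat \<Rightarrow> 'a set) \<Rightarrow> (nat \<Rightarrow> 'a set) \<Rightarrow> 'a set" where
  "Vset n A B = (\<Union>i\<in>{1..2*n}. U A B i)"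

definition tr :: "nat \<Rightarrow> (nat \<Rightarrow> 'a set) \<Rightarrow> (nat \<Rightarrow> 'a set) \<Rightarrow> 'a set \<Rightarrow> nat set" where
  "tr n A B S = {i\<in>{1..2*n}. S \<inter> U A B i \<noteq> {}}"

definition tr1 :: "nat \<Rightarrow> (nat \<Rightarrow> 'a set) \<Rightarrow> (nat \<Rightarrow> 'a set) \<Rightarrow> 'a set \<Rightarrow> nat set" where
  "tr1 n A B S = tr n A B S \<inter> {1..n}"

definition minidx :: "nat \<Rightarrow> (nat \<Rightarrow> 'a set) \<Rightarrow> (nat \<Rightarrow> 'a set) \<Rightarrow> 'a set \<Rightarrow> nat" where
  "minidx n A B S = Min (tr n A B S)"

definition H11 :: "nat \<Rightarrow> nat \<Rightarrow> nat set set \<Rightarrow> (nat \<Rightarrow> 'a set) \<Rightarrow> (nat \<Rightarrow> 'a set) \<Rightarrow> 'a set set" where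
  "H11 k n G A B = {e. e \<subseteq> Vset n A B \<and> card e = k \<and>
     (\<exists>i j. {i, j} \<in> G \<and> tr1 n A B e = {i, j} \<and>
            k div 2 \<le> card (A i \<inter> e) \<and> k div 2 \<le> card (A j \<inter> e))}"

definition H12 :: "nat \<Rightarrow> nat \<Rightarrow> nat \<Rightarrow> (nat \<Rightarrow> 'a set) \<Rightarrow> (nat \<Rightarrow> 'a set) \<Rightarrow> 'a set set" where
  "H12 k l n A B = {e. e \<subseteq> Vset n A B \<and> card e = k \<and>
     (\<exists>i\<in>{1..n}. tr n A B e = {i, n + i} \<and>
            card (A i \<inter> e) = l + 1 \<and> card (A (n + i) \<inter> e) = k - l - 1)}"

definition H1 :: "nat \<Rightarrow> nat \<Rightarrow> nat \<Rightarrow> nat set set \<Rightarrow> (nat \<Rightarrow> 'a set) \<Rightarrow> (nat \<Rightarrow> 'a set) \<Rightarrow> 'a set set" where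
  "H1 k l n G A B = H11 k n G A B \<union> H12 k l n A B"

definition H2 :: "nat \<Rightarrow> nat \<Rightarrow> nat \<Rightarrow> (nat \<Rightarrow> 'a set) \<Rightarrow> (nat \<Rightarrow> 'a set) \<Rightarrow> 'a set set" where
  "H2 k l n A B = {e. e \<subseteq> Vset n A B \<and> card e = k \<and>
     k - l + 1 \<le> card (e \<inter> U A B (minidx n A B e))}"

text \<open>An (l,k)-path on the distinct vertex list vs = [v_1,...,v_m]: its j-th edge
  (0-indexed) is {v_(j(k-l)+1), ..., v_(j(k-l)+k)}.\<close>

definition path_edge :: "nat \<Rightarrow> nat \<Rightarrow> 'a list \<Rightarrow> nat \<Rightarrow> 'a set" where
  "path_edge k l vs j = set (take k (drop (j * (k - l)) vs))"

end

theory Submission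
  imports Defs
begin

lemma pe_img:
  assumes "a + k \<le> length vs"
  shows "set (take k (drop a vs)) = (\<lambda>p. vs!p) ` {a..<a+k}"
proof
  show "set (take k (drop a vs)) \<subseteq> (\<lambda>p. vs!p) ` {a..<a+k}"
    using assms by (auto simp: in_set_conv_nth image_iff intro!: bexI[where x="a+_"])
  show "(\<lambda>p. vs!p) ` {a..<a+k} \<subseteq> set (take k (drop a vs))"
  proof
    fix y assume "y \<in> (\<lambda>p. vs!p) ` {a..<a+k}"
    then obtain p where p: "a \<le> p" "p < a + k" "y = vs!p" by auto
    have "take k (drop a vs) ! (p - a) = y" using p assms by auto
    moreover have "p - a < length (take k (drop a vs))" using p assms by auto
    ultimately show "y \<in> set (take k (drop a vs))" by (metis nth_mem)
  qed
qed

lemma tr_mem: "i \<in> {1..2*n} \<Longrightarrow> x \<in> f \<Longrightarrow> x \<in> U A B i \<Longrightarrow> i \<in> tr n A B f"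
  unfolding tr_def by auto

lemma minidx_le: "i \<in> tr n A B g \<Longrightarrow> minidx n A B g \<le> i"
  unfolding minidx_def by (rule Min_le) (auto simp: tr_def)

lemma minidx_in: "g \<subseteq> Vset n A B \<Longrightarrow> g \<noteq> {} \<Longrightarrow> minidx n A B g \<in> tr n A B g"
proof -
  assume g: "g \<subseteq> Vset n A B" "g \<noteq> {}"
  then obtain x where x: "x \<in> g" by auto
  then have "x \<in> Vset n A B" using g by auto
  then obtain i where i: "i \<in> {1..2*n}" "x \<in> U A B i" unfolding Vset_def by auto
  have "i \<in> tr n A B g" using tr_mem[OF i(1) x i(2)] .
  then have ne: "tr n A B g \<noteq> {}" by auto
  have fin: "finite (tr n A B g)" by (auto simp: tr_def)
  show ?thesis unfolding minidx_def using Min_in[OF fin ne] .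
qed

lemma minidx_range: "g \<subseteq> Vset n A B \<Longrightarrow> g \<noteq> {} \<Longrightarrow> minidx n A B g \<in> {1..2*n}"
  using minidx_in[of g n A B] unfolding tr_def by auto

lemma card_split: "finite g \<Longrightarrow> card g = card (g \<inter> X) + card (g - X)"
  by (metis Int_Diff_Un Int_Diff_disjoint card_Un_disjoint finite_Diff finite_Int)

lemma H2_hit:
  assumes g: "g \<in> H2 k l n A B" and S: "S \<subseteq> g" "l \<le> card S" and kl: "2*l < k" "1 \<le> l"
  shows "\<exists>x\<in>S. x \<in> U A B (minidx n A B g)"
proof (rule ccontr)
  let ?X = "U A B (minidx n A B g)"
  assume "\<not> ?thesis"
  then have "S \<subseteq> g - ?X" using S by auto
  have cg: "card g = k" "k - l + 1 \<le> card (g \<inter> ?X)" using g by (auto simp: H2_def)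
  then have fg: "finite g" using kl by (metis card.infinite not_less_zero gr_zeroI less_nat_zero_code zero_less_iff_neq_zero mult_is_0 neq0_conv) 
  have "card S \<le> card (g - ?X)" using \<open>S \<subseteq> g - ?X\<close> fg by (intro card_mono) auto
  moreover have "card g = card (g \<inter> ?X) + card (g - ?X)" using fg by (rule card_split)
  ultimately show False using cg S kl by linarith
qed

lemma H2_ne: "g \<in> H2 k l n A B \<Longrightarrow> 0 < k \<Longrightarrow> g \<subseteq> Vset n A B \<and> g \<noteq> {}"
  by (auto simp: H2_def)

lemma H2_chain:
  assumes g1: "g1 \<in> H2 k l n A B" and g2: "g2 \<in> H2 k l n A B"
    and S: "S \<subseteq> g1" "S \<subseteq> g2" "l \<le> card S" and kl: "2*l < k" "1 \<le> l"
  shows "minidx n A B g1 = minidx n A B g2"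
proof -
  have r1: "minidx n A B g1 \<in> {1..2*n}" using H2_ne[OF g1] kl by (intro minidx_range) auto
  have r2: "minidx n A B g2 \<in> {1..2*n}" using H2_ne[OF g2] kl by (intro minidx_range) auto
  obtain x where x: "x \<in> S" "x \<in> U A B (minidx n A B g1)" using H2_hit[OF g1 S(1) S(3) kl] by auto
  obtain y where y: "y \<in> S" "y \<in> U A B (minidx n A B g2)" using H2_hit[OF g2 S(2) S(3) kl] by auto
  have "minidx n A B g2 \<le> minidx n A B g1"
    using x S by (intro minidx_le tr_mem[OF r1]) auto
  moreover have "minidx n A B g1 \<le> minidx n A B g2"
    using y S by (intro minidx_le tr_mem[OF r2]) auto
  ultimately show ?thesis by simp
qed

lemma H11_le:
  assumes f: "f \<in> H11 k n G A B" and g: "g \<subseteq> Vset n A B"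
    and S: "S \<subseteq> f" "S \<subseteq> g" "2 \<le> card S"
    and hG: "G \<subseteq> {{i, j} | i j. i \<in> {1..n} \<and> j \<in> {1..n} \<and> i \<noteq> j}"
    and hdisj: "\<forall>i\<in>{1..2*n}. \<forall>j\<in>{1..2*n}.
                  (i \<noteq> j \<longrightarrow> A i \<inter> A j = {} \<and> B i \<inter> B j = {}) \<and> A i \<inter> B j = {}"
    and k: "0 < k"
  shows "minidx n A B g \<le> n"
proof -
  obtain i j where ij: "{i,j} \<in> G" "k div 2 \<le> card (A i \<inter> f)" "k div 2 \<le> card (A j \<inter> f)"
    and cf: "card f = k" using f by (auto simp: H11_def)
  have fin: "finite f" using cf k by (metis card.infinite less_irrefl)
  from ij(1) hG have ir: "i \<in> {1..n}" "j \<in> {1..n}" "i \<noteq> j"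
    by (auto simp: doubleton_eq_iff)
  then have "A i \<inter> A j = {}" using hdisj by auto
  then have "card (f \<inter> (A i \<union> A j)) = card (A i \<inter> f) + card (A j \<inter> f)"
    using fin by (subst card_Un_disjoint[symmetric]) (auto simp: Int_Un_distrib Int_commute intro: arg_cong[where f=card])
  have "\<exists>x\<in>S. x \<in> A i \<union> A j"
  proof (rule ccontr)
    assume "\<not> ?thesis"
    then have "S \<subseteq> f - (A i \<union> A j)" using S by auto
    then have "card S \<le> card (f - (A i \<union> A j))" using fin by (intro card_mono) auto
    moreover have "card f = card (f \<inter> (A i \<union> A j)) + card (f - (A i \<union> A j))" using fin by (rule card_split)
    ultimately show False using cf ij S \<open>card (f \<inter> (A i \<union> A j)) = _\<close> by linarith
  qed
  then obtain x where x: "x \<in> S" "x \<in> A i \<or> x \<in> A j" by auto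
  show ?thesis
  proof (cases "x \<in> A i")
    case True
    then have "i \<in> tr n A B g" using ir x S by (intro tr_mem) (auto simp: U_def)
    then show ?thesis using minidx_le ir by fastforce
  next
    case False
    then have "j \<in> tr n A B g" using ir x S by (intro tr_mem) (auto simp: U_def)
    then show ?thesis using minidx_le ir by fastforce
  qed
qed


theorem claim3p3:
  fixes k l n s :: nat
    and G :: "nat set set"
    and A B :: "nat \<Rightarrow> 'a set"
    and vs :: "'a list"
  assumes hl: "2 \<le> l" and hlk: "2 * l < k" and hn: "1 \<le> n"
    and hG: "G \<subseteq> {{i, j} | i j. i \<in> {1..n} \<and> j \<in> {1..n} \<and> i \<noteq> j}"
    and hfin: "\<forall>i\<in>{1..2*n}. finite (A i) \<and> finite (B i)"
    and hdisj: "\<forall>i\<in>{1..2*n}. \<forall>j\<in>{1..2*n}.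
                  (i \<noteq> j \<longrightarrow> A i \<inter> A j = {} \<and> B i \<inter> B j = {}) \<and> A i \<inter> B j = {}"
    and hA1: "\<forall>i\<in>{1..n}. card (A i) = 2 * (k div 2) + l"
    and hA2: "\<forall>i\<in>{n+1..2*n}. card (A i) = 2 * k - 2 * l - 3"
    and hs: "1 \<le> s"
    and hdist: "distinct vs"
    and hlen: "length vs = k + (s + 1) * (k - l)"
    and he: "path_edge k l vs 0 \<in> H1 k l n G A B"
    and he': "path_edge k l vs (s + 1) \<in> H1 k l n G A B"
    and hmid: "\<forall>i\<in>{1..s}. path_edge k l vs i \<in> H2 k l n A B"
  shows "(\<forall>i\<in>{1..s}. minidx n A B (path_edge k l vs i) = minidx n A B (path_edge k l vs 1))
         \<and> minidx n A B (path_edge k l vs 1)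
             \<in> tr1 n A B (path_edge k l vs 0) \<inter> tr1 n A B (path_edge k l vs (s + 1))
         \<and> \<not> (path_edge k l vs 0 \<in> H12 k l n A B \<and> path_edge k l vs (s + 1) \<in> H12 k l n A B)"
proof -
  define d where "d = k - l"
  define P where "P = path_edge k l vs"
  have dk: "k = d + l" "l < d" using hlk unfolding d_def by auto
  have inj: "inj_on (nth vs) {..<length vs}" using hdist by (intro inj_on_nth) auto
  have Pimg: "P j = nth vs ` {j*d..<j*d+k}" if "j \<le> s+1" for j
  proof -
    have "j*d \<le> (s+1)*d" using that by (rule mult_le_mono1)
    then have "j*d + k \<le> length vs" using hlen unfolding d_def by simp
    then show ?thesis unfolding P_def path_edge_def d_def[symmetric] by (rule pe_img)
  qed
  have shared: "\<exists>S. S \<subseteq> P j \<and> S \<subseteq> P (Suc j) \<and> l \<le> card S" if "j \<le> s" for j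
  proof -
    let ?S = "nth vs ` {Suc j*d..<j*d+k}"
    have "j * d \<le> (s+1)*d" using that by (intro mult_le_mono1) simp
    moreover have "length vs = k + (s+1)*d" using hlen d_def by simp
    ultimately have "j*d + k \<le> length vs" by linarith
    then have sub: "{Suc j*d..<j*d+k} \<subseteq> {..<length vs}" using hlen d_def by auto
    have "card ?S = card {Suc j*d..<j*d+k}" using inj sub by (intro card_image) (rule inj_on_subset)
    also have "\<dots> = l" using dk by simp
    finally have "card ?S = l" .
    moreover have "?S \<subseteq> P j" using that by (subst Pimg) (auto intro!: image_mono)
    moreover have "?S \<subseteq> P (Suc j)" using that by (subst Pimg) (auto intro!: image_mono)
    ultimately show ?thesis by blast
  qed
  have disj: "P 0 \<inter> P (s+1) = {}"
  proof -
    have "d \<le> s*d" using hs by simp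
    then have "k \<le> d + s*d" using dk by linarith
    then have k2: "k \<le> (s+1)*d" by simp
    have e: "{0*d..<0*d+k} \<inter> {(s+1)*d..<(s+1)*d+k} = {}"
    proof -
      have gen: "\<And>a b c e::nat. b \<le> c \<Longrightarrow> {a..<b} \<inter> {c..<e} = {}" by auto
      show ?thesis by (rule gen) (use k2 in simp)
    qed
    have "(s+1)*d + k \<le> length vs" using hlen d_def by simp
    then have "P 0 \<inter> P (s+1) = nth vs ` ({0*d..<0*d+k} \<inter> {(s+1)*d..<(s+1)*d+k})"
      using inj hlen by (simp only: Pimg) (subst inj_on_image_Int[OF inj]; auto)
    then show ?thesis using e by simp
  qed
  have kpos: "0 < k" "1 \<le> l" "2 * l < k" using hlk hl by auto
  have mid: "P i \<in> H2 k l n A B" if "i \<in> {1..s}" for i using hmid that unfolding P_def by blast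
  have eqm: "minidx n A B (P (Suc j)) = minidx n A B (P 1)" if "j < s" for j
    using that
  proof (induction j)
    case 0 then show ?case by simp
  next
    case (Suc j)
    obtain S where S: "S \<subseteq> P (Suc j)" "S \<subseteq> P (Suc (Suc j))" "l \<le> card S"
      using shared[of "Suc j"] Suc by auto
    have "minidx n A B (P (Suc j)) = minidx n A B (P (Suc (Suc j)))"
      using Suc by (intro H2_chain[OF mid mid S kpos(3) kpos(2)]) auto
    moreover have "minidx n A B (P (Suc j)) = minidx n A B (P 1)" using Suc.IH Suc.prems by simp
    ultimately show ?case by linarith
  qed
  have allm: "\<forall>i\<in>{1..s}. minidx n A B (P i) = minidx n A B (P 1)"
  proof
    fix i assume "i \<in> {1..s}"
    then obtain j where "i = Suc j" "j < s" by (cases i) auto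
    then show "minidx n A B (P i) = minidx n A B (P 1)" using eqm[of j] by simp
  qed
  define m where "m = minidx n A B (P 1)"
  have P1: "P 1 \<in> H2 k l n A B" and Ps: "P s \<in> H2 k l n A B" using mid[of 1] mid[of s] hs by simp_all
  have mr: "m \<in> {1..2*n}" unfolding m_def using H2_ne[OF P1] kpos by (intro minidx_range) auto
  have msm: "minidx n A B (P s) = m" using bspec[OF allm, of s] hs unfolding m_def by simp
  obtain S0 where S0: "S0 \<subseteq> P 0" "S0 \<subseteq> P 1" "l \<le> card S0" using shared[of 0] by auto
  obtain Ss where Ss: "Ss \<subseteq> P s" "Ss \<subseteq> P (Suc s)" "l \<le> card Ss" using shared[of s] by auto
  have m0: "m \<in> tr n A B (P 0)"
  proof -
    obtain x where "x \<in> S0" "x \<in> U A B m" using H2_hit[OF P1 S0(2) S0(3) kpos(3) kpos(2)] m_def by auto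
    then show ?thesis using S0 by (intro tr_mem[OF mr]) auto
  qed
  have m1: "m \<in> tr n A B (P (s+1))"
  proof -
    obtain x where "x \<in> Ss" "x \<in> U A B m" using H2_hit[OF Ps Ss(1) Ss(3) kpos(3) kpos(2)] msm by auto
    then show ?thesis using Ss by (intro tr_mem[OF mr]) auto
  qed
  have e0: "P 0 \<in> H1 k l n G A B" and e1: "P (s+1) \<in> H1 k l n G A B" using he he' P_def by auto
  have V1: "P 1 \<subseteq> Vset n A B" "P s \<subseteq> Vset n A B" using P1 Ps by (auto simp: H2_def)
  have notboth: "\<not> (P 0 \<in> H12 k l n A B \<and> P (s+1) \<in> H12 k l n A B)"
  proof
    assume "P 0 \<in> H12 k l n A B \<and> P (s+1) \<in> H12 k l n A B"
    then obtain i i' where i: "i \<in> {1..n}" "tr n A B (P 0) = {i, n+i}" "card (A (n+i) \<inter> P 0) = k - l - 1"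
      and i': "i' \<in> {1..n}" "tr n A B (P (s+1)) = {i', n+i'}" "card (A (n+i') \<inter> P (s+1)) = k - l - 1"
      by (auto simp: H12_def)
    have "i = i'" using m0 m1 i i' by auto
    have fA: "finite (A (n+i))" using hfin i by auto
    have "card (A (n+i) \<inter> P 0) + card (A (n+i) \<inter> P (s+1)) = card ((A (n+i) \<inter> P 0) \<union> (A (n+i) \<inter> P (s+1)))"
      using fA disj by (intro card_Un_disjoint[symmetric]) auto
    also have "\<dots> \<le> card (A (n+i))" using fA by (intro card_mono) auto
    also have "\<dots> = 2*k - 2*l - 3" using hA2 i by auto
    finally have "card (A (n + i) \<inter> P 0) + card (A (n + i) \<inter> P (s + 1)) \<le> 2 * k - 2 * l - 3" .
    moreover have "card (A (n + i) \<inter> P (s + 1)) = k - l - 1" using i' \<open>i = i'\<close> by simp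
    ultimately show False using i hlk hl by arith
  qed
  have mn: "m \<le> n"
  proof (cases "P 0 \<in> H11 k n G A B")
    case True
    have "card S0 \<ge> 2" using S0 hl by linarith
    then show ?thesis unfolding m_def using H11_le[OF True V1(1) S0(1) S0(2) _ hG hdisj kpos(1)] by blast
  next
    case False
    then have "P 0 \<in> H12 k l n A B" using e0 by (auto simp: H1_def)
    then have "P (s+1) \<in> H11 k n G A B" using notboth e1 by (auto simp: H1_def)
    moreover have "card Ss \<ge> 2" using Ss hl by linarith
    ultimately have "minidx n A B (P s) \<le> n" using H11_le[OF _ V1(2) Ss(2) Ss(1) _ hG hdisj kpos(1)] by auto
    then show ?thesis using msm by simp
  qed
  have "m \<in> tr1 n A B (P 0) \<inter> tr1 n A B (P (s+1))" using m0 m1 mn mr by (auto simp: tr1_def)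
  moreover have "\<forall>i\<in>{1..s}. minidx n A B (P i) = m" using allm unfolding m_def .
  ultimately show ?thesis using notboth unfolding P_def[symmetric] m_def[symmetric] by (intro conjI)
qed

end
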